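(* In the social learning model, suppose that $G_-$ and $G_+$ are continuous and that the left tail of $G_-$ is convex and differentiable. Suppose $f\colon\mathbb{R}_{>0}\to\mathbb{R}_{>0}$ satisfies $f'(t)=G_-(-f(t))$ for all sufficiently large $t$. Then, conditional on $\theta=+1$, $$\lim_{t\to\infty}\frac{\ell_t}{f(t)}=1$$ with probability $1$.
   Context: Social learning model. A state $\theta\in\{-1,+1\}$ is drawn with $\mathbb{P}(\theta=+1)=\mathbb{P}(\theta=-1)=1/2$. Agents $t=1,2,\dots$ receive private signals $s_t\in\mathbb{R}$ that are i.i.d. conditionally on $\theta$, with CDF $F_+$ if $\theta=+1$ and $F_-$ if $\theta=-1$; $F_+$ and $F_-$ are mutually absolutely continuous. Let $L_t=\log\frac{\mathbb{P}(\theta=+1\mid s_t)}{\mathbb{P}(\theta=-1\mid s_t)}$ be the private log-likelihood ratio, and let $G_+$, $G_-$ denote the CDFs of $L_t$ conditional on $\theta=+1$, $\theta=-1$ respectively. Signals are assumed unbounded: for every $M\in\mathbb{R}$, $\mathbb{P}(L_t>M)>0$ and $\mathbb{P}(L_t<-M)>0$. Agent $t$ observes $a_1,\dots,a_{t-1}$ and her own signal and chooses $a_t\in\{-1,+1\}$ (utility $1$ if $a_t=\theta$, else $0$). The public belief is $\mu_t=\mathbb{P}(\theta=+1\mid a_1,\dots,a_{t-1})$ and $\ell_t=\log\frac{\mu_t}{1-\mu_t}$ (so $\ell_1=0$). In equilibrium $a_t=+1$ iff $\ell_t+L_t>0$, and otherwise $a_t=-1$. Consequently $\ell_{t+1}=\ell_t+D_+(\ell_t)$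 if $a_t=+1$ and $\ell_{t+1}=\ell_t+D_-(\ell_t)$ if $a_t=-1$, where $D_+(x)=\log\frac{1-G_+(-x)}{1-G_-(-x)}$ and $D_-(x)=\log\frac{G_+(-x)}{G_-(-x)}$. We write $\mathbb{P}_+(\cdot)=\mathbb{P}(\cdot\mid\theta=+1)$ and $\mathbb{E}_+$ for the corresponding expectation. "The left tail of $G_-$ is convex and differentiable" means: there exists $x_0\in\mathbb{R}$ such that the restriction of $G_-$ to $(-\infty,x_0)$ is convex and differentiable. *)

theory Defs
  imports "HOL-Probability.Probability"
begin

text \<open>CDF of the private log-likelihood ratio Lf(s) when the signal s has law F.
  With F = F_+ this is G_+, with F = F_- it is G_-.\<close>
definition llr_cdf :: "real measure \<Rightarrow> (real \<Rightarrow> real) \<Rightarrow> real \<Rightarrow> real" where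
  "llr_cdf F Lf x = measure F {s. Lf s \<le> x}"

definition Dplus :: "(real \<Rightarrow> real) \<Rightarrow> (real \<Rightarrow> real) \<Rightarrow> real \<Rightarrow> real" where
  "Dplus Gp Gm x = ln ((1 - Gp (- x)) / (1 - Gm (- x)))"

definition Dminus :: "(real \<Rightarrow> real) \<Rightarrow> (real \<Rightarrow> real) \<Rightarrow> real \<Rightarrow> real" where
  "Dminus Gp Gm x = ln (Gp (- x) / Gm (- x))"

text \<open>Public log-likelihood ratio: pub_llr Gp Gm L t = \<ell>_t for t \<ge> 1, where L t is
  the private log-likelihood ratio of agent t (agents are 1,2,...). Index 0 is a dummy.
  \<ell>_1 = 0; agent t plays +1 iff \<ell>_t + L_t > 0.\<close>
fun pub_llr :: "(real \<Rightarrow> real) \<Rightarrow> (real \<Rightarrow> real) \<Rightarrow> (nat \<Rightarrow> real) \<Rightarrow> nat \<Rightarrow> real" where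
  "pub_llr Gp Gm L 0 = 0"
| "pub_llr Gp Gm L (Suc t) =
     (if t = 0 then 0
      else (let x = pub_llr Gp Gm L t in
            if x + L t > 0 then x + Dplus Gp Gm x else x + Dminus Gp Gm x))"

end

theory Submission
  imports Defs "HOL-Real_Asymp.Real_Asymp"
begin


locale odef =
  fixes f g :: "real \<Rightarrow> real" and T0 :: real
  assumes T0: "0 < T0" and fT0: "0 < f T0"
    and gpos: "\<And>x. 0 < g x" and gle1: "\<And>x. g x \<le> 1"
    and ganti: "\<And>x y. x \<le> y \<Longrightarrow> g y \<le> g x"
    and der: "\<And>t. T0 \<le> t \<Longrightarrow> (f has_real_derivative g (f t)) (at t)"
begin

lemma mvt: assumes "T0 \<le> a" "a < b" shows "\<exists>z. a < z \<and> z < b \<and> f b - f a = (b - a) * g (f z)"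
  using MVT2[of a b f "\<lambda>t. g (f t)"] assms der by auto

lemma incr: assumes "T0 \<le> a" "a < b" shows "f a < f b"
proof -
  obtain z where "f b - f a = (b - a) * g (f z)" using mvt[OF assms] by blast
  moreover have "0 < (b - a) * g (f z)" using assms gpos by simp
  ultimately show ?thesis by simp
qed

lemma mono: assumes "T0 \<le> a" "a \<le> b" shows "f a \<le> f b"
proof (cases "a = b")
  case False
  then have "a < b" using assms by simp
  then show ?thesis using incr[OF assms(1)] by (simp add: less_imp_le)
qed simp

lemma concave_up: assumes "T0 \<le> t" "t \<le> s" shows "f s \<le> f t + (s - t) * g (f t)"
proof (cases "t = s")
  case True then show ?thesis by simp
next
  case False
  then have ts: "t < s" using assms by simp
  obtain z where z: "t < z" "z < s" "f s - f t = (s - t) * g (f z)" using mvt[OF assms(1) ts] by blast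
  have "g (f z) \<le> g (f t)" using mono[of t z] z assms by (intro ganti) auto
  then have ineq: "(s - t) * g (f z) \<le> (s - t) * g (f t)" using ts by (intro mult_left_mono) auto
  show ?thesis using z(3) ineq by linarith
qed

lemma tg_bound: assumes "T0 \<le> t" shows "t * g (f t) \<le> f t + T0"
proof (cases "t = T0")
  case True
  then show ?thesis using gle1[of "f T0"] fT0 T0 by (smt (verit) mult_left_le)
next
  case False
  then have ts: "T0 < t" using assms by simp
  obtain z where z: "T0 < z" "z < t" "f t - f T0 = (t - T0) * g (f z)" using mvt[OF order_refl ts] by blast
  have "g (f t) \<le> g (f z)" using mono[of z t] z by (intro ganti) auto
  then have "(t - T0) * g (f t) \<le> (t - T0) * g (f z)" using ts by (intro mult_left_mono) auto
  moreover have "T0 * g (f t) \<le> T0" using gle1[of "f t"] T0 by (simp add: mult_left_le)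
  ultimately show ?thesis using z fT0 by (simp add: algebra_simps)
qed

lemma unbounded: "\<exists>t\<ge>T0. B < f t"
proof (rule ccontr)
  assume "\<not> ?thesis"
  then have bd: "\<And>t. T0 \<le> t \<Longrightarrow> f t \<le> B" by (simp add: not_less)
  define t where "t = T0 + (B - f T0 + 1) / g B + 1"
  have gB: "0 < g B" by (rule gpos)
  have "B - f T0 \<ge> 0" using bd[of T0] by simp
  then have tT: "T0 < t" unfolding t_def using gB by (simp add: add_pos_nonneg)
  obtain z where z: "T0 < z" "z < t" "f t - f T0 = (t - T0) * g (f z)" using mvt[OF order_refl tT] by blast
  have "g B \<le> g (f z)" using bd[of z] z by (intro ganti) auto
  then have "(t - T0) * g B \<le> f t - f T0" using z tT by (simp add: mult_left_mono)
  moreover have "(t - T0) * g B = B - f T0 + 1 + g B" unfolding t_def using gB by (simp add: field_simps)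
  ultimately have "B + 1 \<le> f t" using gB by simp
  with bd[of t] tT show False by simp
qed

lemma hits: assumes "f T0 \<le> y" shows "\<exists>t\<ge>T0. f t = y"
proof -
  obtain b where b: "T0 \<le> b" "y < f b" using unbounded[of y] by blast
  have "continuous_on {T0..b} f"
  proof (intro continuous_at_imp_continuous_on ballI)
    fix x assume "x \<in> {T0..b}"
    then show "isCont f x" using der[of x] DERIV_isCont by auto
  qed
  then obtain x where "T0 \<le> x" "x \<le> b" "f x = y" using IVT'[of f T0 y b] assms b by auto
  then show ?thesis by blast
qed

lemma tendsto_top: "filterlim f at_top at_top"
  unfolding filterlim_at_top
proof
  fix B
  obtain t where t: "T0 \<le> t" "B < f t" using unbounded[of B] by blast
  show "eventually (\<lambda>x. B \<le> f x) at_top"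
    unfolding eventually_at_top_linorder
    using t mono[of t] by (intro exI[of _ t]) (smt (verit))
qed

lemma ratio_bounds:
  fixes \<epsilon> x s :: real
  assumes e: "0 < \<epsilon>" "\<epsilon> \<le> 1/4" and x: "T0 \<le> (1 - 2*\<epsilon>) * x"
    and fx: "2 * T0 \<le> f x"
    and s: "(1 - 2*\<epsilon>) * x \<le> s" "s \<le> (1 + 2*\<epsilon>) * x"
  shows "(1 - 3*\<epsilon>) * f x \<le> f s" "f s \<le> (1 + 3*\<epsilon>) * f x"
proof -
  have "0 < (1-2*\<epsilon>)*x" using x T0 by linarith
  then have xp: "0 < x" using e by (simp add: zero_less_mult_iff)
  have "(1-2*\<epsilon>)*x \<le> x" using xp e by (intro mult_left_le_one_le) auto
  then have xT: "T0 \<le> x" using x by linarith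
  have x0: "0 \<le> x" using xT T0 by simp
  define \<mu> where "\<mu> = 1 - 2*\<epsilon>"
  have mu: "1/2 \<le> \<mu>" "\<mu> \<le> 1" unfolding \<mu>_def using e by auto
  have "f s \<le> f ((1 + 2*\<epsilon>) * x)" using s xT x by (intro mono) (auto simp: \<mu>_def)
  also have "\<dots> \<le> f x + ((1 + 2*\<epsilon>) * x - x) * g (f x)"
    using xT x0 e by (intro concave_up) (auto simp: algebra_simps)
  also have "((1 + 2*\<epsilon>) * x - x) * g (f x) = 2*\<epsilon> * (x * g (f x))" by (simp add: algebra_simps)
  also have "2*\<epsilon> * (x * g (f x)) \<le> 2*\<epsilon> * (f x + T0)"
    using tg_bound[OF xT] e by (intro mult_left_mono) auto
  finally have "f s \<le> f x + 2*\<epsilon> * f x + 2*\<epsilon>*T0" by (simp add: algebra_simps)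
  moreover have "2*\<epsilon>*T0 \<le> \<epsilon> * f x" proof -
    have "\<epsilon> * (2*T0) \<le> \<epsilon> * f x" using fx e by (intro mult_left_mono) auto
    then show ?thesis by (simp add: algebra_simps)
  qed
  ultimately show "f s \<le> (1 + 3*\<epsilon>) * f x" by (simp add: algebra_simps)
  define t where "t = \<mu> * x"
  have tT: "T0 \<le> t" using x by (simp add: t_def \<mu>_def)
  have tx: "t \<le> x" unfolding t_def using mu x0 by (simp add: mult_left_le_one_le)
  have "f x \<le> f t + (x - t) * g (f t)" by (rule concave_up[OF tT tx])
  then have "\<mu> * f x \<le> \<mu> * f t + \<mu> * ((x - t) * g (f t))"
    using mu by (simp add: mult_left_mono distrib_left[symmetric])
  also have "\<mu> * ((x - t) * g (f t)) = 2*\<epsilon> * (t * g (f t))"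
    unfolding t_def \<mu>_def by (simp add: algebra_simps)
  also have "2*\<epsilon> * (t * g (f t)) \<le> 2*\<epsilon> * (f t + T0)"
    using tg_bound[OF tT] e by (intro mult_left_mono) auto
  finally have "\<mu> * f x \<le> f t + 2*\<epsilon>*T0" unfolding \<mu>_def by (simp add: algebra_simps)
  moreover have "2*\<epsilon>*T0 \<le> \<epsilon> * f x" proof -
    have "\<epsilon> * (2*T0) \<le> \<epsilon> * f x" using fx e by (intro mult_left_mono) auto
    then show ?thesis by (simp add: algebra_simps)
  qed
  moreover have "f t \<le> f s" using s tT unfolding t_def \<mu>_def by (intro mono) auto
  ultimately show "(1 - 3*\<epsilon>) * f x \<le> f s" unfolding \<mu>_def by (simp add: algebra_simps)
qed

lemma seq_ratio:
  fixes y :: "nat \<Rightarrow> real" and D :: "real \<Rightarrow> real"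
  assumes rec: "\<forall>n\<ge>N. y (Suc n) = y n + D (y n)"
    and ylim: "filterlim y at_top sequentially"
    and Dpos: "eventually (\<lambda>x. 0 < D x) at_top"
    and Dlow: "\<And>\<epsilon>. 0 < \<epsilon> \<Longrightarrow> eventually (\<lambda>x. (1 - \<epsilon>) * g x \<le> D x) at_top"
    and Dup: "\<And>\<epsilon>. 0 < \<epsilon> \<Longrightarrow> eventually (\<lambda>x. D x \<le> (1 + \<epsilon>) * g (x + D x)) at_top"
  shows "(\<lambda>n. y n / f (real n)) \<longlonglongrightarrow> 1"
proof -
  have ev: "eventually (\<lambda>n. P (y n)) sequentially" if "eventually P at_top" for P
    using ylim that by (simp add: filterlim_iff)
  have evT: "eventually (\<lambda>x. f T0 \<le> x) at_top" by (rule eventually_ge_at_top)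
  define \<tau> where "\<tau> n = (SOME t. T0 \<le> t \<and> f t = y n)" for n
  have tau: "T0 \<le> \<tau> n \<and> f (\<tau> n) = y n" if "f T0 \<le> y n" for n
    unfolding \<tau>_def by (rule someI_ex) (use hits[OF that] in blast)
  have step: "D (y n) \<le> (\<tau> (Suc n) - \<tau> n) * g (y n) \<and> (\<tau> (Suc n) - \<tau> n) * g (y n + D (y n)) \<le> D (y n)"
    if n: "f T0 \<le> y n" "N \<le> n" "0 < D (y n)" for n
  proof -
    have ys: "y (Suc n) = y n + D (y n)" using rec n by auto
    have t0: "T0 \<le> \<tau> n" "f (\<tau> n) = y n" using tau[OF n(1)] by auto
    have "f T0 \<le> y (Suc n)" using ys n by simp
    then have t1: "T0 \<le> \<tau> (Suc n)" "f (\<tau> (Suc n)) = y (Suc n)" using tau by auto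
    have lt: "\<tau> n < \<tau> (Suc n)"
    proof (rule ccontr)
      assume "\<not> ?thesis"
      then have "f (\<tau> (Suc n)) \<le> f (\<tau> n)" using t1 by (intro mono) auto
      then show False using t0 t1 ys n by simp
    qed
    obtain z where z: "\<tau> n < z" "z < \<tau> (Suc n)" "f (\<tau> (Suc n)) - f (\<tau> n) = (\<tau> (Suc n) - \<tau> n) * g (f z)"
      using mvt[OF t0(1) lt] by blast
    have m1: "f (\<tau> n) \<le> f z" using z(1) t0(1) by (intro mono) auto
    have m2: "f z \<le> f (\<tau> (Suc n))" using z(1,2) t0(1) by (intro mono) auto
    note m1 m2
    then have g1: "g (f z) \<le> g (y n)" "g (y n + D (y n)) \<le> g (f z)" using t0 t1 ys by (auto intro!: ganti)
    have e: "D (y n) = (\<tau> (Suc n) - \<tau> n) * g (f z)" using z t0 t1 ys by simp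
    have a: "(\<tau> (Suc n) - \<tau> n) * g (f z) \<le> (\<tau> (Suc n) - \<tau> n) * g (y n)"
      using g1 lt by (intro mult_left_mono) auto
    have b: "(\<tau> (Suc n) - \<tau> n) * g (y n + D (y n)) \<le> (\<tau> (Suc n) - \<tau> n) * g (f z)"
      using g1 lt by (intro mult_left_mono) auto
    show ?thesis using a b e by linarith
  qed
  have steps: "eventually (\<lambda>n. f T0 \<le> y n \<and> 1 - \<epsilon> \<le> \<tau> (Suc n) - \<tau> n \<and> \<tau> (Suc n) - \<tau> n \<le> 1 + \<epsilon>) sequentially"
    if e: "0 < \<epsilon>" for \<epsilon>
  proof -
    have "eventually (\<lambda>n. f T0 \<le> y n \<and> 0 < D (y n) \<and> (1 - \<epsilon>) * g (y n) \<le> D (y n) \<and>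
        D (y n) \<le> (1 + \<epsilon>) * g (y n + D (y n)) \<and> N \<le> n) sequentially"
      using ev[OF evT] ev[OF Dpos] ev[OF Dlow[OF e]] ev[OF Dup[OF e]] eventually_ge_at_top[of N]
      by eventually_elim auto
    then show ?thesis
    proof eventually_elim
      case (elim n)
      then have st: "D (y n) \<le> (\<tau> (Suc n) - \<tau> n) * g (y n)" "(\<tau> (Suc n) - \<tau> n) * g (y n + D (y n)) \<le> D (y n)"
        using step[of n] by auto
      have "(1 - \<epsilon>) * g (y n) \<le> (\<tau> (Suc n) - \<tau> n) * g (y n)" using elim st by linarith
      then have a: "1 - \<epsilon> \<le> \<tau> (Suc n) - \<tau> n" using gpos[of "y n"] by (simp add: mult_le_cancel_right)
      have "(\<tau> (Suc n) - \<tau> n) * g (y n + D (y n)) \<le> (1 + \<epsilon>) * g (y n + D (y n))" using elim st by linarith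
      then have b: "\<tau> (Suc n) - \<tau> n \<le> 1 + \<epsilon>" using gpos[of "y n + D (y n)"] by (simp add: mult_le_cancel_right)
      show ?case using a b elim by simp
    qed
  qed
  have flim: "filterlim (\<lambda>n. f (real n)) at_top sequentially"
    by (rule filterlim_compose[OF tendsto_top filterlim_real_sequentially])
  show ?thesis
  proof (rule LIMSEQ_I)
    fix r :: real assume r: "0 < r"
    define \<epsilon> where "\<epsilon> = min (1/4) (r/4)"
    have e: "0 < \<epsilon>" "\<epsilon> \<le> 1/4" "3 * \<epsilon> < r" unfolding \<epsilon>_def using r by auto
    obtain M where M: "\<And>n. M \<le> n \<Longrightarrow> f T0 \<le> y n \<and> 1 - \<epsilon> \<le> \<tau> (Suc n) - \<tau> n \<and> \<tau> (Suc n) - \<tau> n \<le> 1 + \<epsilon>"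
      using steps[OF e(1)] unfolding eventually_sequentially by blast
    have lin: "\<tau> M + (1 - \<epsilon>) * (real n - real M) \<le> \<tau> n \<and> \<tau> n \<le> \<tau> M + (1 + \<epsilon>) * (real n - real M)"
      if "M \<le> n" for n
      using that
    proof (induction n rule: dec_induct)
      case base
      then show ?case by simp
    next
      case (step n)
      then show ?case using M[of n] by (auto simp: algebra_simps)
    qed
    obtain M2 where M2: "\<And>n. M2 \<le> n \<Longrightarrow> 2 * T0 \<le> f (real n)"
      using flim unfolding filterlim_at_top eventually_sequentially by blast
    define n0 where "n0 = max M (max M2 (nat \<lceil>2 * T0 + (\<bar>\<tau> M\<bar> + real M) / \<epsilon>\<rceil>))"
    show "\<exists>no. \<forall>n\<ge>no. norm (y n / f (real n) - 1) < r"
    proof (intro exI allI impI)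
      fix n assume n: "n0 \<le> n"
      have nM: "M \<le> n" and nM2: "M2 \<le> n" using n unfolding n0_def by auto
      have "2 * T0 + (\<bar>\<tau> M\<bar> + real M) / \<epsilon> \<le> real n" using n unfolding n0_def by linarith
      moreover have q: "0 \<le> (\<bar>\<tau> M\<bar> + real M) / \<epsilon>" using e by simp
      ultimately have n1: "2 * T0 \<le> real n" and "(\<bar>\<tau> M\<bar> + real M) / \<epsilon> \<le> real n"
        using T0 by linarith+
      then have n2: "\<bar>\<tau> M\<bar> + real M \<le> \<epsilon> * real n" using e(1) by (simp add: pos_divide_le_eq mult.commute)
      have yt: "f T0 \<le> y n" using M[OF nM] by simp
      have ft: "f (\<tau> n) = y n" using tau[OF yt] by simp
      have l: "\<tau> M + (1 - \<epsilon>) * (real n - real M) \<le> \<tau> n" "\<tau> n \<le> \<tau> M + (1 + \<epsilon>) * (real n - real M)"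
        using lin[OF nM] by auto
      have "(1 + \<epsilon>) * (real n - real M) \<le> (1 + \<epsilon>) * real n" using e by (intro mult_left_mono) auto
      then have up: "\<tau> n \<le> (1 + 2*\<epsilon>) * real n" using l(2) n2 by (simp add: algebra_simps)
      have "(1 - \<epsilon>) * real M \<le> real M" using e by (simp add: mult_left_le_one_le)
      then have lo: "(1 - 2*\<epsilon>) * real n \<le> \<tau> n" using l(1) n2 by (simp add: algebra_simps)
      have "T0 \<le> (1 - 2*\<epsilon>) * real n"
      proof -
        have "1/2 * real n \<le> (1 - 2*\<epsilon>) * real n" using e by (intro mult_right_mono) auto
        then show ?thesis using n1 by simp
      qed
      then have rb: "(1 - 3*\<epsilon>) * f (real n) \<le> f (\<tau> n)" "f (\<tau> n) \<le> (1 + 3*\<epsilon>) * f (real n)"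
        using ratio_bounds[OF e(1) e(2) _ M2[OF nM2] lo up] by auto
      have fp: "0 < f (real n)" using M2[OF nM2] T0 by simp
      have "(1 - 3*\<epsilon>) \<le> y n / f (real n)" "y n / f (real n) \<le> 1 + 3*\<epsilon>"
        using rb ft fp by (auto simp: field_simps)
      then show "norm (y n / f (real n) - 1) < r" using e by auto
    qed
  qed
qed

end



fun lamh :: "(real \<Rightarrow> real) \<Rightarrow> (real \<Rightarrow> real) \<Rightarrow> bool list \<Rightarrow> real" where
  "lamh Dp Dm [] = 0"
| "lamh Dp Dm (a # h) = lamh Dp Dm h + (if a then Dp (lamh Dp Dm h) else Dm (lamh Dp Dm h))"

fun Pph :: "(bool \<Rightarrow> real \<Rightarrow> real) \<Rightarrow> (bool list \<Rightarrow> real) \<Rightarrow> bool list \<Rightarrow> real" where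
  "Pph q lam [] = 1"
| "Pph q lam (a # h) = Pph q lam h * q a (lam h)"

fun histf :: "(bool list \<Rightarrow> real) \<Rightarrow> (nat \<Rightarrow> real) \<Rightarrow> nat \<Rightarrow> bool list" where
  "histf lam L 0 = []"
| "histf lam L (Suc n) = (lam (histf lam L n) + L (Suc n) > 0) # histf lam L n"

lemma finite_len: "finite {h::bool list. length h = n}"
  using finite_lists_length_eq[of "UNIV::bool set" n] by simp

lemma sum_len_Suc: "(\<Sum>h\<in>{h::bool list. length h = Suc n}. F h)
   = (\<Sum>h\<in>{h. length h = n}. F (True # h) + F (False # h))"
proof -
  have e: "{h::bool list. length h = Suc n} = (\<lambda>h. True # h) ` {h. length h = n} \<union> (\<lambda>h. False # h) ` {h. length h = n}"
    by (auto simp: length_Suc_conv)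
  have "(\<Sum>h\<in>{h::bool list. length h = Suc n}. F h) =
     (\<Sum>h\<in>(\<lambda>h. True # h) ` {h. length h = n}. F h) + (\<Sum>h\<in>(\<lambda>h. False # h) ` {h. length h = n}. F h)"
    unfolding e by (rule sum.union_disjoint) (auto intro: finite_len)
  also have "\<dots> = (\<Sum>h\<in>{h. length h = n}. F (True # h)) + (\<Sum>h\<in>{h. length h = n}. F (False # h))"
    by (subst sum.reindex, simp add: inj_on_def)+ simp
  finally show ?thesis by (simp add: sum.distrib)
qed

lemma supermart:
  assumes "\<And>h. q True (lam h) * \<Phi> (True # h) + q False (lam h) * \<Phi> (False # h) \<le> \<Phi> h"
    and "\<And>h. Pph q lam h \<ge> 0"
  shows "(\<Sum>h\<in>{h. length h = n}. Pph q lam h * \<Phi> h) \<le> \<Phi> []"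
proof (induction n)
  case 0
  have "{h::bool list. length h = 0} = {[]}" by auto
  then show ?case by simp
next
  case (Suc n)
  have "(\<Sum>h\<in>{h. length h = Suc n}. Pph q lam h * \<Phi> h)
     = (\<Sum>h\<in>{h. length h = n}. Pph q lam h * (q True (lam h) * \<Phi> (True # h) + q False (lam h) * \<Phi> (False # h)))"
    unfolding sum_len_Suc by (simp add: algebra_simps)
  also have "\<dots> \<le> (\<Sum>h\<in>{h. length h = n}. Pph q lam h * \<Phi> h)"
    by (intro sum_mono mult_left_mono assms)
  finally show ?case using Suc by simp
qed

fun visK :: "(bool list \<Rightarrow> real) \<Rightarrow> real \<Rightarrow> bool list \<Rightarrow> bool" where
  "visK lam K [] = (K \<le> lam [])"
| "visK lam K (a # h) = (visK lam K h \<or> K \<le> lam (a # h))"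

fun hitC :: "(bool list \<Rightarrow> real) \<Rightarrow> real \<Rightarrow> real \<Rightarrow> bool list \<Rightarrow> bool" where
  "hitC lam K c [] = False"
| "hitC lam K c (a # h) = (hitC lam K c h \<or> (visK lam K h \<and> lam (a # h) \<le> c))"

fun stay :: "(bool list \<Rightarrow> real) \<Rightarrow> real \<Rightarrow> real \<Rightarrow> bool list \<Rightarrow> bool" where
  "stay lam m K [] = True"
| "stay lam m K (a # h) = (stay lam m K h \<and> - m < lam (a # h) \<and> lam (a # h) < K)"

lemma sqrt_bc1: assumes "0 \<le> u" "u \<le> 1" "0 \<le> v" "v \<le> 1"
  shows "sqrt (u * v) \<le> (u + v) / 2 - (u - v)^2 / 8"
proof -
  define p where "p = sqrt u"
  define q where "q = sqrt v"
  have p: "0 \<le> p" "p \<le> 1" "u = p^2" using assms by (auto simp: p_def)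
  have q: "0 \<le> q" "q \<le> 1" "v = q^2" using assms by (auto simp: q_def)
  have 1: "sqrt (u * v) = p * q" using assms by (simp add: p_def q_def real_sqrt_mult)
  have 2: "(p+q)^2 \<le> 2^2" using p q by (intro power_mono) auto
  have 3: "(u - v)^2 = (p - q)^2 * (p + q)^2" using p q by (simp add: power2_eq_square algebra_simps)
  have 4: "(p - q)^2 * (p + q)^2 \<le> (p - q)^2 * 4"
    using 2 by (intro mult_left_mono) auto
  have 5: "(u + v) / 2 - (p - q)^2 / 2 = p * q" using p q by (simp add: power2_eq_square field_simps)
  show ?thesis using 1 3 4 5 by linarith
qed

lemma sqrt_bc: fixes a b :: real assumes "0 \<le> a" "a \<le> 1" "0 \<le> b" "b \<le> 1"
  shows "sqrt ((1 - a) * (1 - b)) + sqrt (a * b) \<le> 1 - (a - b)^2 / 4"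
proof -
  have eq: "((1-a) - (1-b))^2 = (a - b)^2" by (simp add: power2_eq_square algebra_simps)
  have "sqrt ((1 - a) * (1 - b)) \<le> ((1-a) + (1-b)) / 2 - (a - b)^2 / 8"
    using sqrt_bc1[of "1-a" "1-b"] assms unfolding eq by auto
  moreover have "sqrt (a * b) \<le> (a + b) / 2 - (a - b)^2 / 8"
    using assms by (intro sqrt_bc1) auto
  ultimately show ?thesis by (simp add: field_simps)
qed

locale SL =
  fixes Fp Fm :: "real measure" and Lf :: "real \<Rightarrow> real" and M :: "'a measure"
    and s :: "nat \<Rightarrow> 'a \<Rightarrow> real"
  assumes Fp_prob: "prob_space Fp" and Fp_sets: "sets Fp = sets borel"
    and Fm_prob: "prob_space Fm" and Fm_sets: "sets Fm = sets borel"
    and ac1: "absolutely_continuous Fm Fp" and ac2: "absolutely_continuous Fp Fm"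
    and Lf_meas: "Lf \<in> borel_measurable borel"
    and Lf_llr: "Fp = density Fm (\<lambda>x. ennreal (exp (Lf x)))"
    and unbounded: "\<forall>B::real.
        (measure Fp {x. Lf x > B} + measure Fm {x. Lf x > B}) / 2 > 0 \<and>
        (measure Fp {x. Lf x < - B} + measure Fm {x. Lf x < - B}) / 2 > 0"
    and M_prob: "prob_space M"
    and s_indep: "prob_space.indep_vars M (\<lambda>_. borel) s UNIV"
    and s_distr: "\<forall>i. distr M borel (s i) = Fp"
begin

sublocale P: prob_space Fp by (rule Fp_prob)
sublocale Q: prob_space Fm by (rule Fm_prob)
sublocale R: prob_space M by (rule M_prob)

abbreviation "Gp \<equiv> llr_cdf Fp Lf"
abbreviation "Gm \<equiv> llr_cdf Fm Lf"

lemma Lf_pre: "A \<in> sets borel \<Longrightarrow> Lf -` A \<in> sets borel"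
  using measurable_sets[OF Lf_meas] by simp

lemma spFp: "space Fp = UNIV" using Fp_sets sets_eq_imp_space_eq by force
lemma spFm: "space Fm = UNIV" using Fm_sets sets_eq_imp_space_eq by force

lemma dens_emeasure: "A \<in> sets borel \<Longrightarrow>
   emeasure Fp A = (\<integral>\<^sup>+y. ennreal (exp (Lf y)) * indicator A y \<partial>Fm)"
proof -
  assume A: "A \<in> sets borel"
  have m: "(\<lambda>x. ennreal (exp (Lf x))) \<in> borel_measurable Fm"
    using Lf_meas by (simp add: measurable_cong_sets[OF Fm_sets refl])
  show ?thesis using emeasure_density[OF m, of A] A Fm_sets Lf_llr by simp
qed

lemma dens_le: assumes A: "A \<in> sets borel" "A \<subseteq> {y. Lf y \<le> c}"
  shows "measure Fp A \<le> exp c * measure Fm A"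
proof -
  have "emeasure Fp A \<le> (\<integral>\<^sup>+y. ennreal (exp c) * indicator A y \<partial>Fm)"
    unfolding dens_emeasure[OF A(1)]
    by (intro nn_integral_mono) (use A(2) in \<open>auto split: split_indicator\<close>)
  also have "\<dots> = ennreal (exp c) * emeasure Fm A"
    using A Fm_sets by (simp add: nn_integral_cmult_indicator)
  finally have "ennreal (measure Fp A) \<le> ennreal (exp c * measure Fm A)"
    using P.emeasure_eq_measure Q.emeasure_eq_measure
    by (simp add: ennreal_mult)
  then show ?thesis by (simp add: ennreal_le_iff)
qed

lemma dens_ge: assumes A: "A \<in> sets borel" "A \<subseteq> {y. Lf y \<ge> c}"
  shows "measure Fp A \<ge> exp c * measure Fm A"
proof -
  have "ennreal (exp c) * emeasure Fm A = (\<integral>\<^sup>+y. ennreal (exp c) * indicator A y \<partial>Fm)"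
    using A Fm_sets by (simp add: nn_integral_cmult_indicator)
  also have "\<dots> \<le> emeasure Fp A"
    unfolding dens_emeasure[OF A(1)]
    by (intro nn_integral_mono) (use A(2) in \<open>auto split: split_indicator\<close>)
  finally have "ennreal (exp c * measure Fm A) \<le> ennreal (measure Fp A)"
    using P.emeasure_eq_measure Q.emeasure_eq_measure
    by (simp add: ennreal_mult)
  then show ?thesis by (simp add: ennreal_le_iff)
qed

lemma sL: "{y. Lf y \<le> c} \<in> sets borel" "{y. Lf y < c} \<in> sets borel"
  "{y. Lf y > c} \<in> sets borel" "{y. Lf y \<ge> c} \<in> sets borel"
  "{y. c' < Lf y \<and> Lf y \<le> c} \<in> sets borel"
  using Lf_meas by measurable

lemma sLP: "{y. Lf y \<le> c} \<in> sets Fp" "{y. Lf y < c} \<in> sets Fp"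
  "{y. Lf y > c} \<in> sets Fp" "{y. c' < Lf y \<and> Lf y \<le> c} \<in> sets Fp"
  using sL Fp_sets by auto
lemma sLQ: "{y. Lf y \<le> c} \<in> sets Fm" "{y. Lf y < c} \<in> sets Fm"
  "{y. Lf y > c} \<in> sets Fm" "{y. c' < Lf y \<and> Lf y \<le> c} \<in> sets Fm"
  using sL Fm_sets by auto

lemma ac_pos: assumes "A \<in> sets borel" "measure Fp A + measure Fm A > 0"
  shows "measure Fp A > 0 \<and> measure Fm A > 0"
proof -
  have AP: "A \<in> sets Fp" and AQ: "A \<in> sets Fm" using assms Fp_sets Fm_sets by auto
  have "measure Fm A \<noteq> 0"
  proof
    assume "measure Fm A = 0"
    then have "A \<in> null_sets Fm" using AQ Q.emeasure_eq_measure by (simp add: null_sets_def)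
    then have "A \<in> null_sets Fp" using ac1 unfolding absolutely_continuous_def by auto
    then have "measure Fp A = 0" by (simp add: measure_def null_sets_def)
    with \<open>measure Fm A = 0\<close> assms show False by simp
  qed
  moreover have "measure Fp A \<noteq> 0"
  proof
    assume "measure Fp A = 0"
    then have "A \<in> null_sets Fp" using AP P.emeasure_eq_measure by (simp add: null_sets_def)
    then have "A \<in> null_sets Fm" using ac2 unfolding absolutely_continuous_def by auto
    then have "measure Fm A = 0" by (simp add: measure_def null_sets_def)
    with \<open>measure Fp A = 0\<close> assms show False by simp
  qed
  ultimately show ?thesis by (simp add: order_le_neq_trans[OF measure_nonneg] )
qed

lemma pos_gt: "measure Fp {y. Lf y > c} > 0 \<and> measure Fm {y. Lf y > c} > 0"
  using unbounded[rule_format, of c] by (intro ac_pos sL) auto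

lemma pos_lt: "measure Fp {y. Lf y < c} > 0 \<and> measure Fm {y. Lf y < c} > 0"
  using unbounded[rule_format, of "-c"] by (intro ac_pos sL) auto

lemma compl_gt: "measure Fp {y. Lf y > c} = 1 - Gp c" "measure Fm {y. Lf y > c} = 1 - Gm c"
proof -
  have e: "{y. Lf y > c} = UNIV - {y. Lf y \<le> c}" by auto
  show "measure Fp {y. Lf y > c} = 1 - Gp c"
    unfolding e llr_cdf_def using P.prob_compl[OF sLP(1)] spFp by simp
  show "measure Fm {y. Lf y > c} = 1 - Gm c"
    unfolding e llr_cdf_def using Q.prob_compl[OF sLQ(1)] spFm by simp
qed

lemma Gpos: "0 < Gp c" "Gp c < 1" "0 < Gm c" "Gm c < 1"
proof -
  have "measure Fp {y. Lf y < c} \<le> Gp c" "measure Fm {y. Lf y < c} \<le> Gm c"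
    unfolding llr_cdf_def using sLP sLQ by (auto intro!: P.finite_measure_mono Q.finite_measure_mono)
  then show "0 < Gp c" "0 < Gm c" using pos_lt[of c] by auto
  show "Gp c < 1" "Gm c < 1" using pos_gt[of c] compl_gt by auto
qed

lemma Gmono: "x \<le> y \<Longrightarrow> Gp x \<le> Gp y" "x \<le> y \<Longrightarrow> Gm x \<le> Gm y"
  unfolding llr_cdf_def using sLP sLQ by (auto intro!: P.finite_measure_mono Q.finite_measure_mono)

lemma I1: "Gp c \<le> exp c * Gm c"
  unfolding llr_cdf_def by (rule dens_le) (auto intro: sL)

lemma I2: "1 - Gp c \<ge> exp c * (1 - Gm c)"
  unfolding compl_gt[symmetric] by (rule dens_ge) (auto intro: sL)

lemma interval_meas: "c' \<le> c \<Longrightarrow> measure Fp {y. c' < Lf y \<and> Lf y \<le> c} = Gp c - Gp c'"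
   "c' \<le> c \<Longrightarrow> measure Fm {y. c' < Lf y \<and> Lf y \<le> c} = Gm c - Gm c'"
proof -
  assume "c' \<le> c"
  then have e: "{y. c' < Lf y \<and> Lf y \<le> c} = {y. Lf y \<le> c} - {y. Lf y \<le> c'}"
    and sub: "{y. Lf y \<le> c'} \<subseteq> {y. Lf y \<le> c}" by auto
  show "measure Fp {y. c' < Lf y \<and> Lf y \<le> c} = Gp c - Gp c'"
    unfolding e llr_cdf_def by (rule P.finite_measure_Diff) (use sLP sub in auto)
  show "measure Fm {y. c' < Lf y \<and> Lf y \<le> c} = Gm c - Gm c'"
    unfolding e llr_cdf_def by (rule Q.finite_measure_Diff) (use sLQ sub in auto)
qed

lemma diff_mono_neg: assumes "c' \<le> c" "c \<le> 0" shows "Gm c' - Gp c' \<le> Gm c - Gp c"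
proof -
  have "measure Fp {y. c' < Lf y \<and> Lf y \<le> c} \<le> exp c * measure Fm {y. c' < Lf y \<and> Lf y \<le> c}"
    by (rule dens_le) (auto intro: sL)
  also have "\<dots> \<le> measure Fm {y. c' < Lf y \<and> Lf y \<le> c}"
    using assms by (intro mult_left_le_one_le) auto
  finally show ?thesis using interval_meas[OF assms(1)] by simp
qed

lemma diff_mono_pos: assumes "c \<le> c'" "0 \<le> c" shows "Gm c' - Gp c' \<le> Gm c - Gp c"
proof -
  have "measure Fm {y. c < Lf y \<and> Lf y \<le> c'} \<le> exp c * measure Fm {y. c < Lf y \<and> Lf y \<le> c'}"
    using assms by (intro mult_le_cancel_right1[THEN iffD2]) auto
  also have "\<dots> \<le> measure Fp {y. c < Lf y \<and> Lf y \<le> c'}"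
    by (rule dens_ge) (auto intro: sL)
  finally show ?thesis using interval_meas[OF assms(1)] by simp
qed

lemma Gm_at_bot: "(Gm \<longlongrightarrow> 0) at_bot"
proof -
  have mL: "Lf \<in> measurable Fm borel" using Lf_meas by (simp add: measurable_cong_sets[OF Fm_sets refl])
  interpret D: real_distribution "distr Fm borel Lf"
    by (auto simp: real_distribution_def real_distribution_axioms_def intro!: Q.prob_space_distr mL)
  have "cdf (distr Fm borel Lf) = Gm"
    by (auto simp: fun_eq_iff cdf_def llr_cdf_def measure_distr[OF mL] spFm vimage_def)
  then show ?thesis using D.cdf_lim_at_bot by simp
qed

abbreviation "Dp \<equiv> Dplus Gp Gm"
abbreviation "Dm \<equiv> Dminus Gp Gm"
abbreviation "lam \<equiv> lamh Dp Dm"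
definition qv :: "bool \<Rightarrow> real \<Rightarrow> real" where
  "qv a x = measure Fp {y. (x + Lf y > 0) = a}"
abbreviation "Pp \<equiv> Pph qv lam"
abbreviation "hist \<omega> \<equiv> histf lam (\<lambda>n. Lf (s n \<omega>))"

lemma qv_T: "qv True x = 1 - Gp (-x)"
proof -
  have "{y. (x + Lf y > 0) = True} = {y. Lf y > -x}" by auto
  then show ?thesis unfolding qv_def using compl_gt(1) by simp
qed

lemma qv_F: "qv False x = Gp (-x)"
proof -
  have "{y. (x + Lf y > 0) = False} = {y. Lf y \<le> -x}" by auto
  then show ?thesis unfolding qv_def llr_cdf_def by simp
qed

lemma qv_nonneg: "qv a x \<ge> 0" unfolding qv_def by simp

lemma Pp_nonneg: "Pp h \<ge> 0"
  by (induction h) (simp_all add: qv_nonneg)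

lemma len_hist: "length (hist \<omega> n) = n"
  by (induction n) auto

lemma pub_hist: "pub_llr Gp Gm (\<lambda>n. Lf (s n \<omega>)) (Suc n) = lam (hist \<omega> n)"
  by (induction n) (auto simp: Let_def)

lemma hist_rep: "hist \<omega> n = h \<longleftrightarrow> length h = n \<and>
   (\<forall>j\<in>{1..n}. (lam (drop (n+1-j) h) + Lf (s j \<omega>) > 0) = h!(n-j))"
proof (induction n arbitrary: h)
  case 0
  then show ?case by auto
next
  case (Suc n)
  show ?case
  proof (cases h)
    case Nil
    then show ?thesis by auto
  next
    case (Cons a h')
    have A: "(\<forall>j\<in>{1..Suc n}. (lam (drop (Suc n+1-j) h) + Lf (s j \<omega>) > 0) = h!(Suc n-j)) \<longleftrightarrow>
      (\<forall>j\<in>{1..n}. (lam (drop (n+1-j) h') + Lf (s j \<omega>) > 0) = h'!(n-j)) \<and>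
      (lam h' + Lf (s (Suc n) \<omega>) > 0) = a"
    proof -
      have "\<forall>j\<in>{1..n}. drop (Suc n+1-j) h = drop (n+1-j) h' \<and> h!(Suc n-j) = h'!(n-j)"
      proof
        fix j assume "j \<in> {1..n}"
        then have "Suc n+1-j = Suc (n+1-j)" "Suc n - j = Suc (n-j)" by auto
        then show "drop (Suc n+1-j) h = drop (n+1-j) h' \<and> h!(Suc n-j) = h'!(n-j)"
          using Cons by simp
      qed
      moreover have "{1..Suc n} = insert (Suc n) {1..n}" by auto
      ultimately show ?thesis using Cons by auto
    qed
    show ?thesis unfolding A using Suc.IH[of h'] Cons by auto
  qed
qed

definition Bset :: "bool list \<Rightarrow> nat \<Rightarrow> real set" where
  "Bset h j = {y. (lam (drop (length h+1-j) h) + Lf y > 0) = h!(length h-j)}"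

lemma Bset_borel: "Bset h j \<in> sets borel"
proof -
  have "Bset h j = {y \<in> space borel. (lam (drop (length h+1-j) h) + Lf y > 0) = h!(length h-j)}"
    by (simp add: Bset_def)
  also have "\<dots> \<in> sets borel" using Lf_meas by measurable
  finally show ?thesis .
qed

lemma prod_Bset: "(\<Prod>j\<in>{1..length h}. measure Fp (Bset h j)) = Pp h"
proof (induction h)
  case Nil
  then show ?case by simp
next
  case (Cons a h)
  have "\<forall>j\<in>{1..length h}. Bset (a # h) j = Bset h j"
  proof
    fix j assume "j \<in> {1..length h}"
    then have "Suc (length h)+1-j = Suc (length h+1-j)" "Suc (length h) - j = Suc (length h-j)" by auto
    then show "Bset (a # h) j = Bset h j" by (simp add: Bset_def)
  qed
  then have p: "(\<Prod>j\<in>{1..length h}. measure Fp (Bset (a#h) j)) = Pp h"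
    using Cons by simp
  have "{1..length (a#h)} = insert (Suc (length h)) {1..length h}" by auto
  then have "(\<Prod>j\<in>{1..length (a#h)}. measure Fp (Bset (a#h) j)) =
     measure Fp (Bset (a#h) (Suc (length h))) * Pp h" using p by simp
  also have "Bset (a#h) (Suc (length h)) = {y. (lam h + Lf y > 0) = a}" by (simp add: Bset_def)
  finally show ?case by (simp add: qv_def)
qed

lemma s_meas: "s j \<in> measurable M borel"
  using s_indep unfolding R.indep_vars_def2 by auto

lemma cyl_set: assumes "length h = n" "n > 0"
  shows "{\<omega>\<in>space M. hist \<omega> n = h} = (\<Inter>j\<in>{1..n}. s j -` Bset h j \<inter> space M)"
  using assms by (auto simp: hist_rep Bset_def)

lemma cyl_sets: "{\<omega>\<in>space M. hist \<omega> n = h} \<in> sets M"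
proof (cases "length h = n")
  case True
  show ?thesis
  proof (cases "n = 0")
    case True
    then show ?thesis using \<open>length h = n\<close> by simp
  next
    case False
    then have "n > 0" by simp
    show ?thesis unfolding cyl_set[OF \<open>length h = n\<close> \<open>n > 0\<close>] using \<open>n > 0\<close>
      by (intro sets.finite_INT) (auto intro: measurable_sets[OF s_meas Bset_borel])
  qed
next
  case False
  then have "{\<omega>\<in>space M. hist \<omega> n = h} = {}" using len_hist by auto
  then show ?thesis by (metis sets.empty_sets)
qed

lemma cyl_prob: assumes "length h = n"
  shows "R.prob {\<omega>\<in>space M. hist \<omega> n = h} = Pp h"
proof (cases "n = 0")
  case True
  then show ?thesis using assms R.prob_space by simp
next
  case False
  have ind: "R.indep_sets (\<lambda>i. {s i -` A \<inter> space M | A. A \<in> sets borel}) UNIV"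
    using s_indep unfolding R.indep_vars_def2 by auto
  have "R.prob (\<Inter>j\<in>{1..n}. s j -` Bset h j \<inter> space M) = (\<Prod>j\<in>{1..n}. R.prob (s j -` Bset h j \<inter> space M))"
    by (rule R.indep_setsD[OF ind]) (use False Bset_borel in auto)
  also have "\<dots> = (\<Prod>j\<in>{1..n}. measure Fp (Bset h j))"
    by (intro prod.cong refl) (metis measure_distr s_meas Bset_borel s_distr sets_borel)
  moreover have "n > 0" using False by simp
  moreover have "(\<Prod>j\<in>{1..n}. measure Fp (Bset h j)) = Pp h" using prod_Bset[of h] assms by simp
  ultimately show ?thesis unfolding cyl_set[OF assms \<open>n > 0\<close>] by simp
qed

lemma hist_UN: "{\<omega>\<in>space M. hist \<omega> n \<in> S} = (\<Union>h\<in>{h. length h = n} \<inter> S. {\<omega>\<in>space M. hist \<omega> n = h})"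
proof (intro set_eqI iffI)
  fix x assume "x \<in> {\<omega>\<in>space M. hist \<omega> n \<in> S}"
  then show "x \<in> (\<Union>h\<in>{h. length h = n} \<inter> S. {\<omega>\<in>space M. hist \<omega> n = h})"
    using len_hist[of x n] by (intro UN_I[of "hist x n"]) auto
next
  fix x assume "x \<in> (\<Union>h\<in>{h. length h = n} \<inter> S. {\<omega>\<in>space M. hist \<omega> n = h})"
  then obtain h where "h \<in> {h. length h = n} \<inter> S" "x \<in> {\<omega>\<in>space M. hist \<omega> n = h}"
    by (rule UN_E)
  then show "x \<in> {\<omega>\<in>space M. hist \<omega> n \<in> S}" by simp
qed

lemma prob_in: "R.prob {\<omega>\<in>space M. hist \<omega> n \<in> S} = (\<Sum>h\<in>{h. length h = n} \<inter> S. Pp h)"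
proof -
  have "R.prob (\<Union>h\<in>{h. length h = n} \<inter> S. {\<omega>\<in>space M. hist \<omega> n = h})
     = (\<Sum>h\<in>{h. length h = n} \<inter> S. R.prob {\<omega>\<in>space M. hist \<omega> n = h})"
  proof (rule R.finite_measure_finite_Union)
    show "finite ({h. length h = n} \<inter> S)" using finite_len by (rule finite_Int[OF disjI1])
    show "(\<lambda>h. {\<omega>\<in>space M. hist \<omega> n = h}) ` ({h. length h = n} \<inter> S) \<subseteq> R.events"
      using cyl_sets by (simp add: image_subset_iff)
    show "disjoint_family_on (\<lambda>h. {\<omega>\<in>space M. hist \<omega> n = h}) ({h. length h = n} \<inter> S)"
      unfolding disjoint_family_on_def by (intro ballI impI) (simp add: set_eq_iff)
  qed
  moreover have "(\<Sum>h\<in>{h. length h = n} \<inter> S. R.prob {\<omega>\<in>space M. hist \<omega> n = h}) = (\<Sum>h\<in>{h. length h = n} \<inter> S. Pp h)"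
  proof (rule sum.cong[OF refl])
    fix h assume "h \<in> {h. length h = n} \<inter> S"
    then show "R.prob {\<omega>\<in>space M. hist \<omega> n = h} = Pp h" by (intro cyl_prob) simp
  qed
  ultimately show ?thesis unfolding hist_UN[symmetric] by simp
qed

lemma in_sets: "{\<omega>\<in>space M. hist \<omega> n \<in> S} \<in> sets M"
  unfolding hist_UN using cyl_sets finite_len by (auto intro!: sets.finite_UN)

lemma prob_bound:
  assumes "\<And>h. length h = n \<Longrightarrow> h \<in> S \<Longrightarrow> 1 \<le> \<Phi> h" "\<And>h. 0 \<le> \<Phi> h"
    and "\<And>h. qv True (lam h) * \<Phi> (True # h) + qv False (lam h) * \<Phi> (False # h) \<le> \<Phi> h"
  shows "R.prob {\<omega>\<in>space M. hist \<omega> n \<in> S} \<le> \<Phi> []"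
proof -
  have "R.prob {\<omega>\<in>space M. hist \<omega> n \<in> S} = (\<Sum>h\<in>{h. length h = n} \<inter> S. Pp h)" by (rule prob_in)
  also have "\<dots> \<le> (\<Sum>h\<in>{h. length h = n} \<inter> S. Pp h * \<Phi> h)"
  proof (intro sum_mono)
    fix h assume "h \<in> {h. length h = n} \<inter> S"
    then have "1 \<le> \<Phi> h" using assms(1) by blast
    then show "Pp h \<le> Pp h * \<Phi> h" using Pp_nonneg[of h] by (metis mult_left_mono mult.right_neutral)
  qed
  also have "\<dots> \<le> (\<Sum>h\<in>{h. length h = n}. Pp h * \<Phi> h)"
    by (intro sum_mono2) (use finite_len Pp_nonneg assms(2) in auto)
  also have "\<dots> \<le> \<Phi> []" by (rule supermart) (use assms Pp_nonneg in auto)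
  finally show ?thesis .
qed

lemma qv_sum: "qv True x + qv False x = 1" by (simp add: qv_T qv_F)
lemma qv_pos: "qv a x > 0" by (cases a) (auto simp: qv_T qv_F Gpos)

lemma lam_cons: "lam (a # h) = lam h + (if a then Dp (lam h) else Dm (lam h))" by simp


end

context SL begin


lemma expDp: "exp (Dp x) = (1 - Gp (-x)) / (1 - Gm (-x))"
  using Gpos[of "-x"] unfolding Dplus_def by simp
lemma expDm: "exp (Dm x) = Gp (-x) / Gm (-x)"
  using Gpos[of "-x"] unfolding Dminus_def by simp

lemma exp_D: "exp (- (x + Dp x)) = exp (-x) * (1 - Gm (-x)) / (1 - Gp (-x))"
   "exp (- (x + Dm x)) = exp (-x) * Gm (-x) / Gp (-x)"
proof -
  have "exp (- (x + Dp x)) = exp (-x) / exp (Dp x)" by (simp add: exp_diff[symmetric])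
  then show "exp (- (x + Dp x)) = exp (-x) * (1 - Gm (-x)) / (1 - Gp (-x))" by (simp add: expDp)
  have "exp (- (x + Dm x)) = exp (-x) / exp (Dm x)" by (simp add: exp_diff[symmetric])
  then show "exp (- (x + Dm x)) = exp (-x) * Gm (-x) / Gp (-x)" by (simp add: expDm)
qed

lemma mart: "qv True x * exp (- (x + Dp x)) + qv False x * exp (- (x + Dm x)) = exp (-x)"
proof -
  have a: "1 - Gp (-x) \<noteq> 0" "Gp (-x) \<noteq> 0" using Gpos[of "-x"] by auto
  have "qv True x * exp (- (x + Dp x)) = exp (-x) * (1 - Gm (-x))"
    unfolding exp_D qv_T using a by simp
  moreover have "qv False x * exp (- (x + Dm x)) = exp (-x) * Gm (-x)"
    unfolding exp_D qv_F using a by simp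
  ultimately show ?thesis by (simp add: algebra_simps)
qed

lemma exp_half: "exp (y/2) = sqrt (exp y)"
proof -
  have "exp (y/2) ^ 2 = exp y" by (simp add: power2_eq_square exp_add[symmetric])
  then show ?thesis by (metis real_sqrt_unique exp_ge_zero)
qed

lemma exp_half_D: "exp (- (x + Dp x) / 2) = exp (-x/2) * sqrt ((1 - Gm (-x)) / (1 - Gp (-x)))"
   "exp (- (x + Dm x) / 2) = exp (-x/2) * sqrt (Gm (-x) / Gp (-x))"
proof -
  have "exp (- (x + Dp x) / 2) = sqrt (exp (- (x + Dp x)))" using exp_half[of "- (x + Dp x)"] by simp
  also have "\<dots> = sqrt (exp (-x)) * sqrt ((1 - Gm (-x)) / (1 - Gp (-x)))"
    unfolding exp_D by (simp add: real_sqrt_mult[symmetric])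
  also have "sqrt (exp (-x)) = exp (-x/2)" using exp_half[of "-x"] by simp
  finally show "exp (- (x + Dp x) / 2) = exp (-x/2) * sqrt ((1 - Gm (-x)) / (1 - Gp (-x)))" .
  have "exp (- (x + Dm x) / 2) = sqrt (exp (- (x + Dm x)))" using exp_half[of "- (x + Dm x)"] by simp
  also have "\<dots> = sqrt (exp (-x)) * sqrt (Gm (-x) / Gp (-x))"
    unfolding exp_D by (simp add: real_sqrt_mult[symmetric])
  also have "sqrt (exp (-x)) = exp (-x/2)" using exp_half[of "-x"] by simp
  finally show "exp (- (x + Dm x) / 2) = exp (-x/2) * sqrt (Gm (-x) / Gp (-x))" .
qed

lemma sqrt_frac: assumes "0 < A" "0 < B" shows "A * sqrt (B / A) = sqrt (A * B)"
proof -
  have "A * B = A^2 * (B/A)" using assms by (simp add: power2_eq_square)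
  then have "sqrt (A*B) = sqrt (A^2) * sqrt (B/A)" by (metis real_sqrt_mult)
  then show ?thesis using assms by simp
qed

lemma bc_eq: "qv True x * exp (- (x + Dp x) / 2) + qv False x * exp (- (x + Dm x) / 2)
   = exp (-x/2) * (sqrt ((1 - Gp (-x)) * (1 - Gm (-x))) + sqrt (Gp (-x) * Gm (-x)))"
proof -
  have "qv True x * exp (- (x + Dp x) / 2) = exp (-x/2) * ((1 - Gp (-x)) * sqrt ((1 - Gm (-x)) / (1 - Gp (-x))))"
    unfolding exp_half_D qv_T by (simp only: ac_simps)
  also have "\<dots> = exp (-x/2) * sqrt ((1 - Gp (-x)) * (1 - Gm (-x)))"
    using sqrt_frac[of "1 - Gp (-x)" "1 - Gm (-x)"] Gpos[of "-x"] by simp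
  finally have 1: "qv True x * exp (- (x + Dp x) / 2) = exp (-x/2) * sqrt ((1 - Gp (-x)) * (1 - Gm (-x)))" .
  have "qv False x * exp (- (x + Dm x) / 2) = exp (-x/2) * (Gp (-x) * sqrt (Gm (-x) / Gp (-x)))"
    unfolding exp_half_D qv_F by (simp only: ac_simps)
  also have "\<dots> = exp (-x/2) * sqrt (Gp (-x) * Gm (-x))"
    using sqrt_frac[of "Gp (-x)" "Gm (-x)"] Gpos[of "-x"] by simp
  finally have 2: "qv False x * exp (- (x + Dm x) / 2) = exp (-x/2) * sqrt (Gp (-x) * Gm (-x))" .
  show ?thesis unfolding 1 2 by (simp add: distrib_left)
qed


lemma cvx2: assumes "0 \<le> p" "0 \<le> q" "p + q = 1" "u \<le> B" "v \<le> B"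
  shows "p * u + q * v \<le> (B::real)"
proof -
  have "p * u + q * v \<le> p * B + q * B" using assms by (intro add_mono mult_left_mono) auto
  also have "\<dots> = (p + q) * B" by (simp add: algebra_simps)
  also have "\<dots> = B" using assms(3) by simp
  finally show ?thesis .
qed

lemma ec: "exp (c - y) = exp c * exp (- y)" for c y :: real
  by (simp add: exp_add[symmetric])

lemma mart_c: "qv True x * exp (c - (x + Dp x)) + qv False x * exp (c - (x + Dm x)) = exp (c - x)"
proof -
  have "qv True x * exp (c - (x + Dp x)) + qv False x * exp (c - (x + Dm x))
     = exp c * (qv True x * exp (- (x + Dp x)) + qv False x * exp (- (x + Dm x)))"
    unfolding ec[of c] by (simp add: algebra_simps)
  also have "\<dots> = exp (c - x)" unfolding mart ec[of c] ..
  finally show ?thesis .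
qed

lemma ville: assumes "c < K"
  shows "R.prob {\<omega>\<in>space M. hist \<omega> n \<in> {h. hitC lam K c h}} \<le> exp (c - K)"
proof -
  define \<Phi> where "\<Phi> h = (if hitC lam K c h then 1 else if visK lam K h then min 1 (exp (c - lam h)) else exp (c - K))" for h
  have "R.prob {\<omega>\<in>space M. hist \<omega> n \<in> {h. hitC lam K c h}} \<le> \<Phi> []"
  proof (rule prob_bound)
    show "1 \<le> \<Phi> h" if "h \<in> {h. hitC lam K c h}" for h using that by (simp add: \<Phi>_def)
    show "0 \<le> \<Phi> h" for h by (simp add: \<Phi>_def)
    show "qv True (lam h) * \<Phi> (True # h) + qv False (lam h) * \<Phi> (False # h) \<le> \<Phi> h" for h
    proof -
      let ?x = "lam h"
      have q: "0 \<le> qv True ?x" "0 \<le> qv False ?x" "qv True ?x + qv False ?x = 1"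
        using qv_nonneg qv_sum by auto
      show ?thesis
      proof (cases "hitC lam K c h")
        case True
        then have "\<Phi> (a # h) = 1" "\<Phi> h = 1" for a by (auto simp: \<Phi>_def)
        then show ?thesis using q by simp
      next
        case nh: False
        show ?thesis
        proof (cases "visK lam K h")
          case True
          have e: "\<Phi> (a # h) = min 1 (exp (c - lam (a # h)))" for a
          proof (cases "lam (a # h) \<le> c")
            case True
            then have "1 \<le> exp (c - lam (a # h))" by simp
            then show ?thesis using True \<open>visK lam K h\<close> by (simp add: \<Phi>_def del: lamh.simps)
          next
            case False
            then show ?thesis using nh \<open>visK lam K h\<close> by (simp add: \<Phi>_def del: lamh.simps)
          qed
          have "qv True ?x * \<Phi> (True # h) + qv False ?x * \<Phi> (False # h) \<le> 1"
            unfolding e using q by (intro cvx2) auto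
          moreover have "qv True ?x * \<Phi> (True # h) + qv False ?x * \<Phi> (False # h) \<le> exp (c - ?x)"
          proof -
            have "qv True ?x * \<Phi> (True # h) + qv False ?x * \<Phi> (False # h)
               \<le> qv True ?x * exp (c - lam (True # h)) + qv False ?x * exp (c - lam (False # h))"
              unfolding e using q by (intro add_mono mult_left_mono) auto
            also have "\<dots> = exp (c - ?x)" using mart_c[where x="?x" and c=c] by simp
            finally show ?thesis .
          qed
          ultimately show ?thesis using True nh by (simp add: \<Phi>_def)
        next
          case False
          have "\<Phi> (a # h) \<le> exp (c - K)" for a
          proof (cases "K \<le> lam (a # h)")
            case True
            then have "exp (c - lam (a # h)) \<le> exp (c - K)" by simp
            then show ?thesis using True nh False by (simp add: \<Phi>_def min_le_iff_disj del: lamh.simps)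
          next
            case f2: False
            then show ?thesis using nh False by (simp add: \<Phi>_def del: lamh.simps)
          qed
          then have "qv True ?x * \<Phi> (True # h) + qv False ?x * \<Phi> (False # h) \<le> exp (c - K)"
            using q by (intro cvx2) auto
          then show ?thesis using nh False by (simp add: \<Phi>_def)
        qed
      qed
    qed
  qed
  also have "\<Phi> [] \<le> exp (c - K)" using assms by (auto simp: \<Phi>_def)
  finally show ?thesis .
qed


lemma stay_bounds: "stay lam m K h \<Longrightarrow> 0 < m \<Longrightarrow> 0 < K \<Longrightarrow> - m < lam h \<and> lam h < K"
  by (cases h) (auto simp del: lamh.simps(2))

lemma gap: assumes "0 < m" "0 < K" "- m < x" "x < K"
  shows "min ((1 - exp (-K)) * Gm (-K)) ((exp m - 1) * (1 - Gm m)) \<le> Gm (-x) - Gp (-x)"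
proof (cases "-x \<le> 0")
  case True
  have "Gm (-K) - Gp (-K) \<le> Gm (-x) - Gp (-x)" using diff_mono_neg[of "-K" "-x"] True assms by simp
  moreover have "Gp (-K) \<le> exp (-K) * Gm (-K)" by (rule I1)
  ultimately have "(1 - exp (-K)) * Gm (-K) \<le> Gm (-x) - Gp (-x)" by (simp add: algebra_simps)
  then show ?thesis by linarith
next
  case False
  have "Gm m - Gp m \<le> Gm (-x) - Gp (-x)" using diff_mono_pos[of "-x" m] False assms by simp
  moreover have "exp m * (1 - Gm m) \<le> 1 - Gp m" by (rule I2)
  ultimately have "(exp m - 1) * (1 - Gm m) \<le> Gm (-x) - Gp (-x)" by (simp add: algebra_simps)
  then show ?thesis by linarith
qed

lemma stay_prob: assumes m: "0 < m" and K: "0 < K"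
  shows "\<exists>\<rho>. 0 < \<rho> \<and> \<rho> < 1 \<and> (\<forall>n. R.prob {\<omega>\<in>space M. hist \<omega> n \<in> {h. stay lam m K h}} \<le> exp (K/2) * \<rho>^n)"
proof -
  define \<delta> where "\<delta> = min ((1 - exp (-K)) * Gm (-K)) ((exp m - 1) * (1 - Gm m))"
  have d0: "0 < \<delta>" unfolding \<delta>_def using Gpos[of "-K"] Gpos[of m] m K by auto
  have d1: "\<delta> \<le> 1"
  proof -
    have "\<delta> \<le> (1 - exp (-K)) * Gm (-K)" unfolding \<delta>_def by simp
    also have "\<dots> \<le> 1 * 1" using Gpos[of "-K"] by (intro mult_mono) auto
    finally show ?thesis by simp
  qed
  define \<rho> where "\<rho> = 1 - \<delta>^2 / 4"
  have r0: "0 < \<rho>" unfolding \<rho>_def using d0 d1 power_le_one[of \<delta> 2] by auto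
  have r1: "\<rho> < 1" unfolding \<rho>_def using d0 by auto
  have bc: "sqrt ((1 - Gp (-x)) * (1 - Gm (-x))) + sqrt (Gp (-x) * Gm (-x)) \<le> \<rho>"
    if "- m < x" "x < K" for x
  proof -
    have g: "\<delta> \<le> Gm (-x) - Gp (-x)" unfolding \<delta>_def using gap[OF m K that] .
    have "\<delta>^2 \<le> (Gm (-x) - Gp (-x))^2" using g d0 by (intro power_mono) auto
    also have "\<dots> = (Gp (-x) - Gm (-x))^2" by (simp add: power2_eq_square algebra_simps)
    finally have "\<delta>^2 \<le> (Gp (-x) - Gm (-x))^2" .
    moreover have "sqrt ((1 - Gp (-x)) * (1 - Gm (-x))) + sqrt (Gp (-x) * Gm (-x)) \<le> 1 - (Gp (-x) - Gm (-x))^2 / 4"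
      using Gpos[of "-x"] by (intro sqrt_bc) auto
    ultimately show ?thesis unfolding \<rho>_def by linarith
  qed
  have "R.prob {\<omega>\<in>space M. hist \<omega> n \<in> {h. stay lam m K h}} \<le> exp (K/2) * \<rho>^n" for n
  proof -
    define C where "C = exp (K/2) * \<rho>^n"
    have C0: "0 < C" unfolding C_def using r0 by simp
    define \<Phi> where "\<Phi> h = (if stay lam m K h then C * (exp (- lam h / 2) / \<rho>^(length h)) else 0)" for h
    have "R.prob {\<omega>\<in>space M. hist \<omega> n \<in> {h. stay lam m K h}} \<le> \<Phi> []"
    proof (rule prob_bound)
      show "1 \<le> \<Phi> h" if "length h = n" "h \<in> {h. stay lam m K h}" for h
      proof -
        have "lam h < K" using stay_bounds[of m K h] that m K by auto
        then have "1 \<le> exp (K/2 - lam h / 2)" by simp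
        also have "\<dots> = exp (K/2) * exp (- lam h / 2)" by (simp add: exp_add[symmetric])
        finally show ?thesis using that r0 by (simp add: \<Phi>_def C_def)
      qed
      show "0 \<le> \<Phi> h" for h using C0 r0 by (simp add: \<Phi>_def)
      show "qv True (lam h) * \<Phi> (True # h) + qv False (lam h) * \<Phi> (False # h) \<le> \<Phi> h" for h
      proof (cases "stay lam m K h")
        case False
        then show ?thesis by (simp add: \<Phi>_def)
      next
        case True
        let ?x = "lam h" and ?l = "length h"
        have xb: "- m < ?x" "?x < K" using stay_bounds[OF True m K] by auto
        have le: "\<Phi> (a # h) \<le> C / \<rho>^(Suc ?l) * exp (- lam (a # h) / 2)" for a
          using C0 r0 by (simp add: \<Phi>_def del: lamh.simps)
        have "qv True ?x * \<Phi> (True # h) + qv False ?x * \<Phi> (False # h)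
           \<le> qv True ?x * (C / \<rho>^(Suc ?l) * exp (- lam (True # h) / 2))
             + qv False ?x * (C / \<rho>^(Suc ?l) * exp (- lam (False # h) / 2))"
          using qv_nonneg by (intro add_mono mult_left_mono le) auto
        also have "\<dots> = C / \<rho>^(Suc ?l) * (qv True ?x * exp (- (?x + Dp ?x) / 2) + qv False ?x * exp (- (?x + Dm ?x) / 2))"
          by (simp add: algebra_simps)
        also have "\<dots> = C / \<rho>^(Suc ?l) * exp (- ?x / 2) * (sqrt ((1 - Gp (-?x)) * (1 - Gm (-?x))) + sqrt (Gp (-?x) * Gm (-?x)))"
          unfolding bc_eq by simp
        also have "\<dots> \<le> C / \<rho>^(Suc ?l) * exp (- ?x / 2) * \<rho>"
          using bc[OF xb] C0 r0 by (intro mult_left_mono) auto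
        also have "\<dots> = \<Phi> h" using True r0 by (simp add: \<Phi>_def)
        finally show ?thesis .
      qed
    qed
    also have "\<Phi> [] = C" by (simp add: \<Phi>_def)
    finally show ?thesis unfolding C_def .
  qed
  then show ?thesis using r0 r1 by blast
qed


lemma ville_inf: assumes "c < K"
  shows "{\<omega>\<in>space M. \<exists>n. hitC lam K c (hist \<omega> n)} \<in> sets M"
    "R.prob {\<omega>\<in>space M. \<exists>n. hitC lam K c (hist \<omega> n)} \<le> exp (c - K)"
proof -
  define E where "E n = {\<omega>\<in>space M. hist \<omega> n \<in> {h. hitC lam K c h}}" for n
  have eq: "{\<omega>\<in>space M. \<exists>n. hitC lam K c (hist \<omega> n)} = (\<Union>n. E n)" unfolding E_def by (simp add: set_eq_iff)
  have sE: "range E \<subseteq> sets M" unfolding E_def using in_sets by blast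
  then show "{\<omega>\<in>space M. \<exists>n. hitC lam K c (hist \<omega> n)} \<in> sets M" unfolding eq by blast
  have inc: "incseq E"
  proof (rule incseq_SucI)
    fix n show "E n \<subseteq> E (Suc n)" unfolding E_def by (auto simp del: lamh.simps)
  qed
  have "(\<lambda>n. R.prob (E n)) \<longlonglongrightarrow> R.prob (\<Union>n. E n)" by (rule R.finite_Lim_measure_incseq[OF sE inc])
  moreover have "R.prob (E n) \<le> exp (c - K)" for n unfolding E_def by (rule ville[OF assms])
  ultimately have "R.prob (\<Union>n. E n) \<le> exp (c - K)" by (intro LIMSEQ_le_const2) auto
  then show "R.prob {\<omega>\<in>space M. \<exists>n. hitC lam K c (hist \<omega> n)} \<le> exp (c - K)" unfolding eq .
qed

lemma stay_inf: assumes "0 < m" "0 < K"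
  shows "{\<omega>\<in>space M. \<forall>n. stay lam m K (hist \<omega> n)} \<in> sets M"
    "R.prob {\<omega>\<in>space M. \<forall>n. stay lam m K (hist \<omega> n)} = 0"
proof -
  define E where "E n = {\<omega>\<in>space M. hist \<omega> n \<in> {h. stay lam m K h}}" for n
  have eq: "{\<omega>\<in>space M. \<forall>n. stay lam m K (hist \<omega> n)} = (\<Inter>n. E n)" unfolding E_def by (simp add: set_eq_iff)
  have sE: "E n \<in> sets M" for n unfolding E_def using in_sets by blast
  then show S: "{\<omega>\<in>space M. \<forall>n. stay lam m K (hist \<omega> n)} \<in> sets M" unfolding eq by blast
  obtain \<rho> where r: "0 < \<rho>" "\<rho> < 1" and b: "\<And>n. R.prob (E n) \<le> exp (K/2) * \<rho>^n"
    using stay_prob[OF assms] unfolding E_def by blast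
  have "R.prob (\<Inter>n. E n) \<le> exp (K/2) * \<rho>^n" for n
    using R.finite_measure_mono[of "\<Inter>n. E n" "E n"] sE b[of n] by (meson INT_lower UNIV_I order_trans)
  moreover have "(\<lambda>n. exp (K/2) * \<rho>^n) \<longlonglongrightarrow> 0"
    using r by (intro tendsto_mult_right_zero LIMSEQ_power_zero) auto
  ultimately have "R.prob (\<Inter>n. E n) \<le> 0" by (intro LIMSEQ_le_const[of "\<lambda>n. exp (K/2) * \<rho>^n" 0]) auto
  then show "R.prob {\<omega>\<in>space M. \<forall>n. stay lam m K (hist \<omega> n)} = 0" unfolding eq
    using measure_nonneg[of M "\<Inter>n. E n"] by linarith
qed


lemma not_stay: "\<not> stay lam m K (hist \<omega> n) \<Longrightarrow> \<exists>j\<le>n. lam (hist \<omega> j) \<le> - m \<or> K \<le> lam (hist \<omega> j)"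
proof (induction n)
  case 0
  then show ?case by simp
next
  case (Suc n)
  show ?case
  proof (cases "stay lam m K (hist \<omega> n)")
    case False
    then show ?thesis using Suc.IH le_Suc_eq by blast
  next
    case True
    then have "\<not> (- m < lam (hist \<omega> (Suc n)) \<and> lam (hist \<omega> (Suc n)) < K)"
      using Suc.prems by (simp del: lamh.simps)
    then show ?thesis by (intro exI[of _ "Suc n"]) auto
  qed
qed

lemma visK0: "visK lam 0 h"
  by (induction h) auto

lemma visK_of: "K \<le> lam h \<Longrightarrow> visK lam K h"
  by (cases h) (auto simp del: lamh.simps)

lemma visK_mono: assumes "visK lam K (hist \<omega> j)" "j \<le> p" shows "visK lam K (hist \<omega> p)"
  using assms(2)
proof (induction p rule: dec_induct)
  case base
  then show ?case using assms(1) .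
next
  case (step p)
  then show ?case by (simp del: lamh.simps)
qed

lemma exp_lim: "(\<lambda>k::nat. 2 * exp (- (real k + 1))) \<longlonglongrightarrow> 0"
  by real_asymp

lemma eventually_above: "AE \<omega> in M. \<exists>N. \<forall>n\<ge>N. real c < lam (hist \<omega> n)"
proof -
  define A where "A k = {\<omega>\<in>space M. \<exists>n. hitC lam 0 (- (real k + 1)) (hist \<omega> n)}" for k :: nat
  define B where "B k = {\<omega>\<in>space M. \<forall>n. stay lam (real k + 1) (real c + real k + 1) (hist \<omega> n)}" for k :: nat
  define C where "C k = {\<omega>\<in>space M. \<exists>n. hitC lam (real c + real k + 1) (real c) (hist \<omega> n)}" for k :: nat
  have sA: "A k \<in> sets M" and pA: "R.prob (A k) \<le> exp (- (real k + 1))" for k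
    using ville_inf[of "- (real k + 1)" 0] unfolding A_def by auto
  have sC: "C k \<in> sets M" and pC: "R.prob (C k) \<le> exp (- (real k + 1))" for k
    using ville_inf[of "real c" "real c + real k + 1"] unfolding C_def by auto
  have sB: "B k \<in> sets M" and pB: "R.prob (B k) = 0" for k
    using stay_inf[of "real k + 1" "real c + real k + 1"] unfolding B_def by auto
  define N0 where "N0 = (\<Inter>k. A k \<union> B k \<union> C k)"
  have sN: "N0 \<in> sets M" unfolding N0_def using sA sB sC by auto
  have pN: "R.prob N0 \<le> 2 * exp (- (real k + 1))" for k
  proof -
    have "R.prob N0 \<le> R.prob (A k \<union> B k \<union> C k)"
      unfolding N0_def using sA sB sC by (intro R.finite_measure_mono) auto
    also have "\<dots> \<le> R.prob (A k \<union> B k) + R.prob (C k)"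
      using sA sB sC by (intro measure_Un_le) auto
    also have "R.prob (A k \<union> B k) \<le> R.prob (A k) + R.prob (B k)"
      using sA sB by (intro measure_Un_le) auto
    finally show ?thesis using pA[of k] pB[of k] pC[of k] by linarith
  qed
  have "R.prob N0 \<le> 0" by (rule LIMSEQ_le_const[OF exp_lim]) (use pN in auto)
  then have "N0 \<in> null_sets M" using sN R.emeasure_eq_measure measure_nonneg[of M N0]
    by (auto simp: null_sets_def)
  moreover have "{\<omega>\<in>space M. \<not> (\<exists>N. \<forall>n\<ge>N. real c < lam (hist \<omega> n))} \<subseteq> N0"
  proof
    fix \<omega> assume w: "\<omega> \<in> {\<omega>\<in>space M. \<not> (\<exists>N. \<forall>n\<ge>N. real c < lam (hist \<omega> n))}"
    then have sp: "\<omega> \<in> space M" and bad: "\<And>N. \<exists>n\<ge>N. lam (hist \<omega> n) \<le> real c"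
      by (auto simp: not_less simp del: lamh.simps)
    show "\<omega> \<in> N0" unfolding N0_def
    proof
      fix k :: nat
      show "\<omega> \<in> A k \<union> B k \<union> C k"
      proof (cases "\<omega> \<in> A k \<or> \<omega> \<in> B k")
        case True
        then show ?thesis by blast
      next
        case False
        then have nA: "\<omega> \<notin> A k" and nB: "\<omega> \<notin> B k" by auto
        from nB sp obtain n where "\<not> stay lam (real k + 1) (real c + real k + 1) (hist \<omega> n)"
          unfolding B_def by blast
        from not_stay[OF this] obtain j where
          j: "lam (hist \<omega> j) \<le> - (real k + 1) \<or> real c + real k + 1 \<le> lam (hist \<omega> j)" by blast
        have up: "real c + real k + 1 \<le> lam (hist \<omega> j)"
        proof (rule ccontr)
          assume "\<not> ?thesis"
          then have low: "lam (hist \<omega> j) \<le> - (real k + 1)" using j by blast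
          have "j \<noteq> 0"
          proof
            assume "j = 0"
            with low show False by simp
          qed
          then obtain i where ji: "j = Suc i" by (cases j) auto
          have "hitC lam 0 (- (real k + 1)) (hist \<omega> (Suc i))"
            using low visK0[of "hist \<omega> i"] unfolding ji by (simp del: lamh.simps)
          then have "\<omega> \<in> A k" using sp unfolding A_def by blast
          with nA show False by blast
        qed
        have vj: "visK lam (real c + real k + 1) (hist \<omega> j)" by (rule visK_of[OF up])
        obtain n' where n': "n' \<ge> Suc j" "lam (hist \<omega> n') \<le> real c" using bad by blast
        then obtain p where p: "n' = Suc p" "j \<le> p" by (cases n') auto
        have "visK lam (real c + real k + 1) (hist \<omega> p)" by (rule visK_mono[OF vj p(2)])
        then have "hitC lam (real c + real k + 1) (real c) (hist \<omega> (Suc p))"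
          using n'(2) unfolding p(1) by (simp del: lamh.simps)
        then have "\<omega> \<in> C k" using sp unfolding C_def by blast
        then show ?thesis by blast
      qed
    qed
  qed
  ultimately show ?thesis by (rule AE_I')
qed


lemma Dp_split: "Dp x = ln (1 - Gp (-x)) - ln (1 - Gm (-x))"
  unfolding Dplus_def using Gpos[of "-x"] by (simp add: ln_div)

lemma Dp_upper: "Dp x \<le> Gm (-x) / (1 - Gm (-x))"
proof -
  have p: "0 < 1 - Gp (-x)" "0 < 1 - Gm (-x)" using Gpos[of "-x"] by auto
  have "Dp x \<le> ((1 - Gp (-x)) - (1 - Gm (-x))) / (1 - Gm (-x))"
    unfolding Dp_split by (rule ln_diff_le[OF p])
  also have "\<dots> \<le> Gm (-x) / (1 - Gm (-x))" using p Gpos[of "-x"] by (intro divide_right_mono) auto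
  finally show ?thesis .
qed

lemma Dp_lower: assumes "0 \<le> x" shows "Gm (-x) * (1 - exp (-x)) \<le> Dp x"
proof -
  have p: "0 < 1 - Gp (-x)" "0 < 1 - Gm (-x)" using Gpos[of "-x"] by auto
  have a: "Gp (-x) \<le> exp (-x) * Gm (-x)" by (rule I1)
  have e1: "exp (-x) \<le> 1" using assms by simp
  have "exp (-x) * Gm (-x) \<le> Gm (-x)" using e1 Gpos[of "-x"] by (intro mult_left_le_one_le) auto
  then have ab: "Gp (-x) \<le> Gm (-x)" using a by linarith
  have "ln (1 - Gm (-x)) - ln (1 - Gp (-x)) \<le> ((1 - Gm (-x)) - (1 - Gp (-x))) / (1 - Gp (-x))"
    by (rule ln_diff_le[OF p(2) p(1)])
  then have "(Gm (-x) - Gp (-x)) / (1 - Gp (-x)) \<le> Dp x" unfolding Dp_split diff_divide_distrib by linarith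
  moreover have "Gm (-x) - Gp (-x) \<le> (Gm (-x) - Gp (-x)) / (1 - Gp (-x))"
  proof -
    have "(Gm (-x) - Gp (-x)) * (1 - Gp (-x)) \<le> Gm (-x) - Gp (-x)"
      using ab Gpos[of "-x"] by (intro mult_right_le_one_le) auto
    then show ?thesis using p by (simp add: le_divide_eq)
  qed
  moreover have "Gm (-x) * (1 - exp (-x)) \<le> Gm (-x) - Gp (-x)" using a by (simp add: algebra_simps)
  ultimately show ?thesis by linarith
qed

lemma Dm_le: "Dm x \<le> - x"
proof -
  have "Gp (-x) / Gm (-x) \<le> exp (-x)" using I1[of "-x"] Gpos[of "-x"] by (simp add: divide_le_eq)
  then have "Dm x \<le> ln (exp (-x))" unfolding Dminus_def using Gpos[of "-x"] by (intro ln_mono) auto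
  then show ?thesis by simp
qed

lemma g_lim: "((\<lambda>x. Gm (-x)) \<longlongrightarrow> 0) at_top"
  by (rule filterlim_compose[OF Gm_at_bot filterlim_uminus_at_bot_at_top])

lemma convex_step: assumes conv: "convex_on {..<x0} Gm" and x: "1 - x0 < x" and h: "0 \<le> h"
  shows "Gm (-x) - Gm (-(x+h)) \<le> h * Gm (-(x-1))"
proof -
  define t where "t = h / (1 + h)"
  have t: "0 \<le> t" "t \<le> 1" unfolding t_def using h by auto
  have in1: "-(x+h) \<in> {..<x0}" "-(x-1) \<in> {..<x0}" using x h by auto
  have e1: "1 - t = 1 / (1 + h)" unfolding t_def using h by (simp add: field_simps)
  have e2: "(1 - t) * (-(x+h)) + t * (-(x-1)) = (-(x+h) + h * (-(x-1))) / (1+h)"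
    unfolding e1 unfolding t_def by (simp add: add_divide_distrib)
  have e3: "-(x+h) + h * (-(x-1)) = -x * (1+h)" by (simp add: algebra_simps)
  have pt: "(1 - t) *\<^sub>R (-(x+h)) + t *\<^sub>R (-(x-1)) = -x"
    using e2 unfolding e3 using h by simp
  have "Gm (-x) \<le> (1 - t) * Gm (-(x+h)) + t * Gm (-(x-1))"
    using convex_onD[OF conv t in1] unfolding pt .
  then have l: "(1 + h) * Gm (-x) \<le> (1 + h) * ((1 - t) * Gm (-(x+h)) + t * Gm (-(x-1)))"
    using h by (intro mult_left_mono) auto
  have m1: "(1 + h) * (1 - t) = 1" using e1 h by simp
  have m2: "(1 + h) * t = h" unfolding t_def using h by simp
  have "(1 + h) * ((1 - t) * Gm (-(x+h)) + t * Gm (-(x-1)))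
      = ((1 + h) * (1 - t)) * Gm (-(x+h)) + ((1 + h) * t) * Gm (-(x-1))"
    by (simp add: algebra_simps)
  then have r: "(1 + h) * ((1 - t) * Gm (-(x+h)) + t * Gm (-(x-1))) = Gm (-(x+h)) + h * Gm (-(x-1))"
    unfolding m1 m2 by simp
  have "0 \<le> h * Gm (-x)" using h Gpos[of "-x"] by simp
  moreover have "(1 + h) * Gm (-x) = Gm (-x) + h * Gm (-x)" by (simp add: algebra_simps)
  ultimately show ?thesis using l r by linarith
qed


lemma exp_neg_lim: "((\<lambda>x::real. exp (- x)) \<longlongrightarrow> 0) at_top"
  by real_asymp

lemma Dlow_ev: assumes "0 < \<epsilon>" shows "eventually (\<lambda>x. (1 - \<epsilon>) * Gm (-x) \<le> Dp x) at_top"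
  using order_tendstoD(2)[OF exp_neg_lim assms] eventually_ge_at_top[of 0]
proof eventually_elim
  case (elim x)
  have "(1 - \<epsilon>) * Gm (-x) \<le> (1 - exp (-x)) * Gm (-x)"
    using elim Gpos[of "-x"] by (intro mult_right_mono) auto
  also have "\<dots> \<le> Dp x" using Dp_lower[OF elim(2)] by (simp add: mult.commute)
  finally show ?case .
qed

lemma Dpos_ev: "eventually (\<lambda>x. 0 < Dp x) at_top"
  using eventually_ge_at_top[of 1]
proof eventually_elim
  case (elim x)
  have "0 < Gm (-x) * (1 - exp (-x))" using elim Gpos[of "-x"] by simp
  also have "\<dots> \<le> Dp x" using Dp_lower elim by simp
  finally show ?case .
qed

lemma Dup_ev: assumes conv: "convex_on {..<x0} Gm" and e: "0 < \<epsilon>"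
  shows "eventually (\<lambda>x. Dp x \<le> (1 + \<epsilon>) * Gm (-(x + Dp x))) at_top"
proof -
  define e' where "e' = min \<epsilon> 1"
  define \<delta> where "\<delta> = e' / 4"
  have e': "0 < e'" "e' \<le> 1" "e' \<le> \<epsilon>" unfolding e'_def using e by auto
  have d: "0 < \<delta>" "e' = 4 * \<delta>" unfolding \<delta>_def using e' by auto
  obtain X where X: "\<And>x. X \<le> x \<Longrightarrow> Gm (-x) < \<delta>"
    using order_tendstoD(2)[OF g_lim d(1)] unfolding eventually_at_top_linorder by blast
  have "eventually (\<lambda>x. max (X + 1) (max 0 (2 - x0)) \<le> x) at_top" by (rule eventually_ge_at_top)
  then show ?thesis
  proof eventually_elim
    case (elim x)
    define D where "D = Dp x"
    define gx where "gx = Gm (-x)"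
    define g1 where "g1 = Gm (-(x-1))"
    have gx: "0 < gx" "gx < \<delta>" "gx < 1" using X[of x] elim Gpos[of "-x"] unfolding gx_def by auto
    have g1: "0 < g1" "g1 < \<delta>" using X[of "x-1"] elim Gpos[of "-(x-1)"] unfolding g1_def by auto
    have x0: "0 \<le> x" using elim by simp
    have D0: "0 \<le> D" unfolding D_def
      using Dp_lower[OF x0] Gpos[of "-x"] x0 by (smt (verit) exp_le_one_iff mult_nonneg_nonneg neg_le_0_iff_le)
    have s1: "D * (1 - gx) \<le> gx" using Dp_upper[of x] gx unfolding D_def gx_def
      by (simp add: le_divide_eq)
    have cv: "gx - Gm (-(x + D)) \<le> D * g1" unfolding gx_def g1_def
      by (rule convex_step[OF conv _ D0]) (use elim in auto)
    have p: "e' * gx \<le> gx" using e' gx by (intro mult_left_le_one_le) auto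
    have q: "(1 + e') * (1 - gx) = 1 + e' - gx - e' * gx" by (simp add: algebra_simps)
    have s2: "1 + 2 * \<delta> \<le> (1 + e') * (1 - gx)" using p q d gx by linarith
    have "D * (1 + 2 * \<delta>) \<le> D * ((1 + e') * (1 - gx))" using s2 D0 by (intro mult_left_mono) auto
    also have "\<dots> = (1 + e') * (D * (1 - gx))" by (simp add: algebra_simps)
    also have "\<dots> \<le> (1 + e') * gx" using s1 e' by (intro mult_left_mono) auto
    finally have s3: "D * (1 + 2 * \<delta>) \<le> (1 + e') * gx" .
    have "(1 + e') * g1 \<le> 2 * g1" using e' g1 by (intro mult_right_mono) auto
    then have "(1 + e') * g1 \<le> 2 * \<delta>" using g1 by linarith
    then have s4: "D * ((1 + e') * g1) \<le> D * (2 * \<delta>)" using D0 by (intro mult_left_mono) auto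
    have "D \<le> (1 + e') * (gx - D * g1)"
      using s3 s4 by (simp add: algebra_simps)
    also have "\<dots> \<le> (1 + e') * Gm (-(x + D))" using cv e' by (intro mult_left_mono) auto
    also have "\<dots> \<le> (1 + \<epsilon>) * Gm (-(x + D))" using e' Gpos[of "-(x + D)"] by (intro mult_right_mono) auto
    finally show ?case unfolding D_def .
  qed
qed


lemma main:
  assumes conv: "convex_on {..<x0} Gm" and fpos: "\<forall>t>0. f t > 0"
    and fode: "\<forall>\<^sub>F t in at_top. (f has_real_derivative (Gm (- f t))) (at t)"
  shows "AE \<omega> in M. ((\<lambda>t. pub_llr Gp Gm (\<lambda>n. Lf (s n \<omega>)) t / f (real t)) \<longlonglongrightarrow> 1)"
proof -
  obtain T1 where T1: "\<And>t. T1 \<le> t \<Longrightarrow> (f has_real_derivative (Gm (- f t))) (at t)"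
    using fode unfolding eventually_at_top_linorder by blast
  define T0 where "T0 = max T1 1"
  interpret O: odef f "\<lambda>x. Gm (-x)" T0
  proof
    show "0 < T0" unfolding T0_def by simp
    show "0 < f T0" using fpos unfolding T0_def by simp
    show "0 < Gm (-x)" for x using Gpos by simp
    show "Gm (-x) \<le> 1" for x using Gpos[of "-x"] by simp
    show "Gm (-y) \<le> Gm (-x)" if "x \<le> y" for x y using Gmono(2)[of "-y" "-x"] that by simp
    show "(f has_real_derivative Gm (- f t)) (at t)" if "T0 \<le> t" for t using T1 that unfolding T0_def by simp
  qed
  have ae: "AE \<omega> in M. \<forall>c::nat. \<exists>N. \<forall>n\<ge>N. real c < lam (hist \<omega> n)"
    unfolding AE_all_countable using eventually_above by blast
  then show ?thesis
  proof (rule eventually_mono)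
    fix \<omega> assume H: "\<forall>c::nat. \<exists>N. \<forall>n\<ge>N. real c < lam (hist \<omega> n)"
    define y where "y t = pub_llr Gp Gm (\<lambda>n. Lf (s n \<omega>)) t" for t
    have yS: "y (Suc n) = lam (hist \<omega> n)" for n unfolding y_def by (rule pub_hist)
    have ylim: "filterlim y at_top sequentially"
    proof -
      have "filterlim (\<lambda>n. y (Suc n)) at_top sequentially"
        unfolding filterlim_at_top eventually_sequentially yS
      proof
        fix Z :: real
        obtain N where N: "\<forall>n\<ge>N. real (nat \<lceil>Z\<rceil>) < lam (hist \<omega> n)" using H by blast
        have "Z \<le> real (nat \<lceil>Z\<rceil>)" by linarith
        then show "\<exists>N. \<forall>n\<ge>N. Z \<le> lam (hist \<omega> n)" using N by (meson less_imp_le order_trans)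
      qed
      then show ?thesis by (simp add: filterlim_sequentially_Suc)
    qed
    obtain N0 where N0: "\<And>n. N0 \<le> n \<Longrightarrow> 0 < lam (hist \<omega> n)" using H[rule_format, of 0] by auto
    have rec: "\<forall>t\<ge>Suc N0. y (Suc t) = y t + Dp (y t)"
    proof (intro allI impI)
      fix t assume t: "Suc N0 \<le> t"
      then obtain n where n: "t = Suc n" "N0 \<le> n" by (cases t) auto
      have yt: "y t = lam (hist \<omega> n)" using yS n by simp
      have pos1: "0 < y t" using N0[OF n(2)] yt by simp
      have pos2: "0 < y (Suc t)" using N0[of "Suc n"] n yS by simp
      have e: "y (Suc t) = (if y t + Lf (s t \<omega>) > 0 then y t + Dp (y t) else y t + Dm (y t))"
        unfolding y_def using n by (simp add: Let_def)
      show "y (Suc t) = y t + Dp (y t)"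
      proof (cases "y t + Lf (s t \<omega>) > 0")
        case True
        then show ?thesis using e by simp
      next
        case False
        then have "y (Suc t) = y t + Dm (y t)" using e by simp
        then have "y (Suc t) \<le> 0" using Dm_le[of "y t"] by simp
        with pos2 show ?thesis by simp
      qed
    qed
    have "(\<lambda>n. y n / f (real n)) \<longlonglongrightarrow> 1"
      by (rule O.seq_ratio[OF rec ylim Dpos_ev Dlow_ev Dup_ev[OF conv]])
    then show "(\<lambda>t. pub_llr Gp Gm (\<lambda>n. Lf (s n \<omega>)) t / f (real t)) \<longlonglongrightarrow> 1" unfolding y_def .
  qed
qed

end

theorem theorem3:
  fixes Fp Fm :: "real measure"
    and Lf :: "real \<Rightarrow> real"
    and M :: "'a measure"
    and s :: "nat \<Rightarrow> 'a \<Rightarrow> real"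
    and f :: "real \<Rightarrow> real"
  assumes Fp_prob: "prob_space Fp" and Fp_sets: "sets Fp = sets borel"
    and Fm_prob: "prob_space Fm" and Fm_sets: "sets Fm = sets borel"
    and mutual_ac: "absolutely_continuous Fm Fp" "absolutely_continuous Fp Fm"
    and Lf_meas: "Lf \<in> borel_measurable borel"
    and Lf_llr: "Fp = density Fm (\<lambda>x. ennreal (exp (Lf x)))"
    and unbounded: "\<forall>B::real.
        (measure Fp {x. Lf x > B} + measure Fm {x. Lf x > B}) / 2 > 0 \<and>
        (measure Fp {x. Lf x < - B} + measure Fm {x. Lf x < - B}) / 2 > 0"
    and M_prob: "prob_space M"
    and s_indep: "prob_space.indep_vars M (\<lambda>_. borel) s UNIV"
    and s_distr: "\<forall>i. distr M borel (s i) = Fp"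
    and Gp_cont: "continuous_on UNIV (llr_cdf Fp Lf)"
    and Gm_cont: "continuous_on UNIV (llr_cdf Fm Lf)"
    and Gm_tail: "\<exists>x0. convex_on {..<x0} (llr_cdf Fm Lf) \<and>
                        (\<forall>x<x0. llr_cdf Fm Lf differentiable (at x))"
    and f_pos: "\<forall>t>0. f t > 0"
    and f_ode: "\<forall>\<^sub>F t in at_top.
                  (f has_real_derivative (llr_cdf Fm Lf (- f t))) (at t)"
  shows "AE \<omega> in M.
     ((\<lambda>t. pub_llr (llr_cdf Fp Lf) (llr_cdf Fm Lf) (\<lambda>n. Lf (s n \<omega>)) t / f (real t))
        \<longlongrightarrow> 1) sequentially"
proof -
  have "SL Fp Fm Lf M s"
    unfolding SL_def using Fp_prob Fp_sets Fm_prob Fm_sets mutual_ac Lf_meas Lf_llr unbounded M_prob s_indep s_distr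
    by auto
  then interpret SL Fp Fm Lf M s .
  obtain x0 where "convex_on {..<x0} (llr_cdf Fm Lf)" using Gm_tail by blast
  then show ?thesis by (rule main[OF _ f_pos f_ode])
qed

end
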